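(* Let $X$ be a connected bipartite graph with $n$ vertices and $m\ge n$ edges, and let $\{a,b\}\neq\{\alpha,\beta\}$ be edges of $X$. If $\mathbf f_{ab}$ and $\mathbf f_{\alpha\beta}$ are strongly cospectral with respect to the adjacency matrix of the line graph $\mathcal L(X)$, then $\{\{a,b\},\{\alpha,\beta\}\}$ is an edge-cut of $X$ (i.e. deleting these two edges disconnects $X$).
   Context: The line graph $\mathcal L(X)$ has vertex set $E(X)$ with edges adjacent iff they share an endpoint; $\mathbf f_{ab}$ is the vertex state of the vertex corresponding to $\{a,b\}$. For $M=\sum_\theta\theta F_\theta$ (orthogonal spectral projections), vectors $\mathbf x,\mathbf y$ are strongly cospectral if $F_\theta\mathbf x=\pm F_\theta\mathbf y$ for every eigenvalue $\theta$. *)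

theory Defs
  imports Complex_Main
begin

definition simple_graph :: "'v set \<Rightarrow> 'v set set \<Rightarrow> bool" where
  "simple_graph V E \<longleftrightarrow> finite V \<and>
     (\<forall>e\<in>E. \<exists>x y. x \<in> V \<and> y \<in> V \<and> x \<noteq> y \<and> e = {x, y})"

definition graph_connected :: "'v set \<Rightarrow> 'v set set \<Rightarrow> bool" where
  "graph_connected V E \<longleftrightarrow> V \<noteq> {} \<and>
     (\<forall>u\<in>V. \<forall>v\<in>V. (\<lambda>x y. {x, y} \<in> E)\<^sup>*\<^sup>* u v)"

definition bipartite :: "'v set \<Rightarrow> 'v set set \<Rightarrow> bool" where
  "bipartite V E \<longleftrightarrow> (\<exists>c :: 'v \<Rightarrow> bool. \<forall>x\<in>V. \<forall>y\<in>V. {x, y} \<in> E \<longrightarrow> c x \<noteq> c y)"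

definition line_adj :: "'v set set \<Rightarrow> 'v set \<Rightarrow> 'v set \<Rightarrow> real" where
  "line_adj E e f = (if e \<in> E \<and> f \<in> E \<and> e \<noteq> f \<and> e \<inter> f \<noteq> {} then 1 else 0)"

text \<open>Vectors in R^I are functions vanishing outside the index set I.\<close>
definition inner_on :: "'i set \<Rightarrow> ('i \<Rightarrow> real) \<Rightarrow> ('i \<Rightarrow> real) \<Rightarrow> real" where
  "inner_on I x y = (\<Sum>i\<in>I. x i * y i)"

definition eigenspace_on :: "'i set \<Rightarrow> ('i \<Rightarrow> 'i \<Rightarrow> real) \<Rightarrow> real \<Rightarrow> ('i \<Rightarrow> real) set" where
  "eigenspace_on I M \<theta> = {x. (\<forall>i. i \<notin> I \<longrightarrow> x i = 0) \<and>
       (\<forall>i\<in>I. (\<Sum>j\<in>I. M i j * x j) = \<theta> * x i)}"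

definition is_eigenvalue_on :: "'i set \<Rightarrow> ('i \<Rightarrow> 'i \<Rightarrow> real) \<Rightarrow> real \<Rightarrow> bool" where
  "is_eigenvalue_on I M \<theta> \<longleftrightarrow> (\<exists>x\<in>eigenspace_on I M \<theta>. x \<noteq> (\<lambda>_. 0))"

text \<open>F_theta: orthogonal projection onto the theta-eigenspace (spectral idempotent
  of the symmetric matrix M = sum_theta theta F_theta).\<close>
definition spectral_proj :: "'i set \<Rightarrow> ('i \<Rightarrow> 'i \<Rightarrow> real) \<Rightarrow> real \<Rightarrow> ('i \<Rightarrow> real) \<Rightarrow> ('i \<Rightarrow> real)" where
  "spectral_proj I M \<theta> x = (THE p. p \<in> eigenspace_on I M \<theta> \<and>
       (\<forall>w\<in>eigenspace_on I M \<theta>. inner_on I (\<lambda>i. x i - p i) w = 0))"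

definition strongly_cospectral :: "'i set \<Rightarrow> ('i \<Rightarrow> 'i \<Rightarrow> real) \<Rightarrow> ('i \<Rightarrow> real) \<Rightarrow> ('i \<Rightarrow> real) \<Rightarrow> bool" where
  "strongly_cospectral I M x y \<longleftrightarrow>
     (\<forall>\<theta>. is_eigenvalue_on I M \<theta> \<longrightarrow>
        spectral_proj I M \<theta> x = spectral_proj I M \<theta> y \<or>
        spectral_proj I M \<theta> x = (\<lambda>i. - spectral_proj I M \<theta> y i))"

definition vertex_state :: "'i \<Rightarrow> ('i \<Rightarrow> real)" where
  "vertex_state e = (\<lambda>i. if i = e then 1 else 0)"

end

theory Submission
  imports Defs
begin

definition subsp :: "'i set \<Rightarrow> ('i \<Rightarrow> real) set \<Rightarrow> bool" where
  "subsp S W \<longleftrightarrow> (\<lambda>_. 0) \<in> W \<and> (\<forall>x\<in>W. \<forall>y\<in>W. \<forall>c. (\<lambda>i. x i + c * y i) \<in> W)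
     \<and> (\<forall>x\<in>W. \<forall>i. i \<notin> S \<longrightarrow> x i = 0)"

lemma subsp_comb: "subsp S W \<Longrightarrow> x \<in> W \<Longrightarrow> y \<in> W \<Longrightarrow> (\<lambda>i. x i + c * y i) \<in> W"
  unfolding subsp_def by blast

lemma subsp_diff: "subsp S W \<Longrightarrow> x \<in> W \<Longrightarrow> y \<in> W \<Longrightarrow> (\<lambda>i. x i - y i) \<in> W"
  using subsp_comb[of S W x y "-1"] by simp

lemma inner_add_right: "inner_on E f (\<lambda>i. a i + c * b i) = inner_on E f a + c * inner_on E f b"
proof -
  have "(\<Sum>i\<in>E. f i * (a i + c * b i)) = (\<Sum>i\<in>E. f i * a i + c * (f i * b i))"
    by (rule sum.cong) (auto simp: algebra_simps)
  also have "\<dots> = (\<Sum>i\<in>E. f i * a i) + c * (\<Sum>i\<in>E. f i * b i)"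
    by (simp add: sum.distrib sum_distrib_left)
  finally show ?thesis unfolding inner_on_def .
qed
lemma inner_sub_left: "inner_on E (\<lambda>i. x i - (a i + c * b i)) w
   = inner_on E (\<lambda>i. x i - a i) w - c * inner_on E b w"
proof -
  have "(\<Sum>i\<in>E. (x i - (a i + c * b i)) * w i) = (\<Sum>i\<in>E. (x i - a i) * w i - c * (b i * w i))"
    by (rule sum.cong) (auto simp: algebra_simps)
  also have "\<dots> = (\<Sum>i\<in>E. (x i - a i) * w i) - c * (\<Sum>i\<in>E. b i * w i)"
    by (simp add: sum_subtractf sum_distrib_left)
  finally show ?thesis unfolding inner_on_def .
qed

lemma inner_comm: "inner_on E a b = inner_on E b a"
  unfolding inner_on_def by (simp add: mult.commute)

lemma proj_exists:
  assumes "finite S" "S \<subseteq> E" "subsp S W" "finite E"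
  shows "\<exists>p\<in>W. \<forall>w\<in>W. inner_on E (\<lambda>i. x i - p i) w = 0"
  using assms
proof (induction S arbitrary: W x rule: finite_induct)
  case empty
  then have "\<forall>w\<in>W. w = (\<lambda>_. 0)" unfolding subsp_def by auto
  moreover have "(\<lambda>_. 0) \<in> W" using empty unfolding subsp_def by auto
  have "\<forall>w\<in>W. inner_on E (\<lambda>i. x i - 0) w = 0"
  proof
    fix w assume "w \<in> W"
    then have "w = (\<lambda>_. 0)" using \<open>\<forall>w\<in>W. w = (\<lambda>_. 0)\<close> by blast
    then show "inner_on E (\<lambda>i. x i - 0) w = 0" by (simp add: inner_on_def)
  qed
  then show ?case using \<open>(\<lambda>_. 0) \<in> W\<close> by (rule bexI[of _ "\<lambda>_. 0"])
next
  case (insert s S W x)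
  define W0 where "W0 = {w\<in>W. w s = 0}"
  have sub0: "subsp S W0" using insert.prems(2) unfolding subsp_def W0_def by auto
  have IH: "\<And>y. \<exists>p\<in>W0. \<forall>w\<in>W0. inner_on E (\<lambda>i. y i - p i) w = 0"
    using insert.IH[OF _ sub0] insert.prems by auto
  show ?case
  proof (cases "\<forall>w\<in>W. w s = 0")
    case True
    then have "W0 = W" unfolding W0_def by auto
    then show ?thesis using IH by auto
  next
    case False
    then obtain u where u: "u \<in> W" "u s \<noteq> 0" by auto
    obtain q where q: "q \<in> W0" "\<forall>w\<in>W0. inner_on E (\<lambda>i. u i - q i) w = 0" using IH by blast
    define u' where "u' = (\<lambda>i. u i - q i)"
    have u'W: "u' \<in> W" unfolding u'_def using subsp_diff[OF insert.prems(2) u(1)] q(1) W0_def by auto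
    have u's: "u' s \<noteq> 0" using u q(1) unfolding u'_def W0_def by auto
    have u'orth: "\<forall>w\<in>W0. inner_on E u' w = 0" using q(2) unfolding u'_def by simp
    define N where "N = inner_on E u' u'"
    have "s \<in> E" using insert.prems(1) by auto
    have Npos: "N > 0" unfolding N_def inner_on_def
      by (rule sum_pos2[OF insert.prems(3) \<open>s \<in> E\<close>]) (use u's in \<open>simp_all add: zero_less_mult_iff\<close>, linarith)
    obtain p0 where p0: "p0 \<in> W0" "\<forall>w\<in>W0. inner_on E (\<lambda>i. x i - p0 i) w = 0" using IH by blast
    define k where "k = inner_on E (\<lambda>i. x i - p0 i) u' / N"
    define p where "p = (\<lambda>i. p0 i + k * u' i)"
    have pW: "p \<in> W" unfolding p_def using subsp_comb[OF insert.prems(2)] p0(1) u'W W0_def by auto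
    have "\<forall>w\<in>W. inner_on E (\<lambda>i. x i - p i) w = 0"
    proof
      fix w assume wW: "w \<in> W"
      define c where "c = w s / u' s"
      define w1 where "w1 = (\<lambda>i. w i + (- c) * u' i)"
      have "w1 \<in> W" unfolding w1_def using subsp_comb[OF insert.prems(2) wW u'W] .
      moreover have "w1 s = 0" unfolding w1_def c_def using u's by simp
      ultimately have w1W0: "w1 \<in> W0" unfolding W0_def by auto
      have weq: "w = (\<lambda>i. w1 i + c * u' i)" unfolding w1_def by auto
      have A: "inner_on E (\<lambda>i. x i - p i) w1 = 0"
        unfolding p_def inner_sub_left using p0(2) w1W0 u'orth by simp
      have B: "inner_on E (\<lambda>i. x i - p i) u' = 0"
        unfolding p_def inner_sub_left using Npos unfolding k_def N_def by simp
      show "inner_on E (\<lambda>i. x i - p i) w = 0"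
        by (subst weq, subst inner_add_right) (simp add: A B)
    qed
    then show ?thesis using pW by blast
  qed
qed

lemma proj_unique:
  assumes "subsp E W" "p \<in> W" "q \<in> W"
    "\<forall>w\<in>W. inner_on E (\<lambda>i. x i - p i) w = 0"
    "\<forall>w\<in>W. inner_on E (\<lambda>i. x i - q i) w = 0" "finite E"
  shows "p = q"
proof -
  define d where "d = (\<lambda>i. p i - q i)"
  have dW: "d \<in> W" unfolding d_def using subsp_diff assms by blast
  have "inner_on E (\<lambda>i. x i - q i) d - inner_on E (\<lambda>i. x i - p i) d = 0" using assms(4,5) dW by simp
  then have "inner_on E d d = 0" unfolding inner_on_def d_def
    by (simp add: sum_subtractf[symmetric] left_diff_distrib)
  then have "\<forall>i\<in>E. d i * d i = 0" unfolding inner_on_def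
    using sum_nonneg_eq_0_iff[OF assms(6), of "\<lambda>i. d i * d i"] by simp
  then have "\<forall>i\<in>E. d i = 0" by simp
  moreover have "\<forall>i. i \<notin> E \<longrightarrow> d i = 0" using dW assms(1) unfolding subsp_def by blast
  ultimately show ?thesis unfolding d_def by (metis eq_iff_diff_eq_0 ext)
qed

lemma eig_subsp: "subsp I (eigenspace_on I M \<theta>)"
  unfolding subsp_def
proof (intro conjI ballI allI impI)
  show "(\<lambda>_. 0) \<in> eigenspace_on I M \<theta>" unfolding eigenspace_on_def by simp
next
  fix x y c assume x: "x \<in> eigenspace_on I M \<theta>" and y: "y \<in> eigenspace_on I M \<theta>"
  have "(\<Sum>j\<in>I. M i j * (x j + c * y j)) = \<theta> * (x i + c * y i)" if "i \<in> I" for i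
  proof -
    have "(\<Sum>j\<in>I. M i j * (x j + c * y j)) = (\<Sum>j\<in>I. M i j * x j) + c * (\<Sum>j\<in>I. M i j * y j)"
      by (simp add: sum.distrib sum_distrib_left distrib_left mult.left_commute)
    also have "\<dots> = \<theta> * (x i + c * y i)" using x y that unfolding eigenspace_on_def
      by (simp add: distrib_left)
    finally show ?thesis .
  qed
  then show "(\<lambda>i. x i + c * y i) \<in> eigenspace_on I M \<theta>" using x y unfolding eigenspace_on_def by auto
next
  fix x i assume "x \<in> eigenspace_on I M \<theta>" "i \<notin> I"
  then show "x i = 0" unfolding eigenspace_on_def by auto
qed

lemma spectral_proj_spec:
  assumes "finite I"
  shows "spectral_proj I M \<theta> x \<in> eigenspace_on I M \<theta> \<and>
    (\<forall>w\<in>eigenspace_on I M \<theta>. inner_on I (\<lambda>i. x i - spectral_proj I M \<theta> x i) w = 0)"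
proof -
  let ?W = "eigenspace_on I M \<theta>"
  have ex: "\<exists>p\<in>?W. \<forall>w\<in>?W. inner_on I (\<lambda>i. x i - p i) w = 0"
    using proj_exists[OF assms order_refl eig_subsp assms] .
  have "\<exists>!p. p \<in> ?W \<and> (\<forall>w\<in>?W. inner_on I (\<lambda>i. x i - p i) w = 0)"
    using ex proj_unique[OF eig_subsp _ _ _ _ assms] by blast
  from theI'[OF this] show ?thesis unfolding spectral_proj_def .
qed

lemma inner_diff_left: "inner_on E (\<lambda>i. x i - p i) w = inner_on E x w - inner_on E p w"
  unfolding inner_on_def by (simp add: left_diff_distrib sum_subtractf)

lemma inner_neg_left: "inner_on E (\<lambda>i. - p i) w = - inner_on E p w"
  unfolding inner_on_def by (simp add: sum_negf)

lemma inner_vs: "finite E \<Longrightarrow> e \<in> E \<Longrightarrow> inner_on E (vertex_state e) w = w e"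
proof -
  assume "finite E" "e \<in> E"
  have "inner_on E (vertex_state e) w = (\<Sum>i\<in>E. if i = e then w i else 0)"
    unfolding inner_on_def vertex_state_def by (rule sum.cong) auto
  then show ?thesis using \<open>finite E\<close> \<open>e \<in> E\<close> by simp
qed

lemma walk_flow:
  fixes Ed E :: "'v set set" and \<sigma> :: "'v \<Rightarrow> real"
  assumes fin: "finite E" and sub: "Ed \<subseteq> E"
    and edge: "\<And>y w. {y,w} \<in> Ed \<Longrightarrow> y \<noteq> w \<and> \<sigma> y = - \<sigma> w"
    and "(\<lambda>x y. {x,y} \<in> Ed)\<^sup>*\<^sup>* u v"
  shows "\<exists>z. (\<forall>f. f \<notin> Ed \<longrightarrow> z f = 0) \<and>
    (\<forall>x. (\<Sum>f\<in>E. if x \<in> f then z f else 0) = \<sigma> x * ((if x = u then 1 else 0) - (if x = v then 1 else 0)))"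
  using assms(4)
proof (induction rule: rtranclp_induct)
  case base
  show ?case by (intro exI[of _ "\<lambda>_. 0"]) simp
next
  case (step y w)
  from step.IH obtain z where z: "\<forall>f. f \<notin> Ed \<longrightarrow> z f = 0"
    "\<forall>x. (\<Sum>f\<in>E. if x \<in> f then z f else 0) = \<sigma> x * ((if x = u then 1 else 0) - (if x = y then 1 else 0))"
    by blast
  have yw: "y \<noteq> w" "\<sigma> y = - \<sigma> w" using edge step.hyps(2) by auto
  have ywE: "{y,w} \<in> E" using step.hyps(2) sub by auto
  define z' where "z' = (\<lambda>f. z f + (if f = {y,w} then \<sigma> y else 0))"
  have "\<forall>f. f \<notin> Ed \<longrightarrow> z' f = 0" using z(1) step.hyps(2) unfolding z'_def by auto
  moreover have "(\<Sum>f\<in>E. if x \<in> f then z' f else 0) = \<sigma> x * ((if x = u then 1 else 0) - (if x = w then 1 else 0))" for x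
  proof -
    have "(\<Sum>f\<in>E. if x \<in> f then z' f else 0) = (\<Sum>f\<in>E. (if x \<in> f then z f else 0) + (if f = {y,w} then (if x \<in> {y,w} then \<sigma> y else 0) else 0))"
      by (rule sum.cong) (auto simp: z'_def)
    also have "\<dots> = (\<Sum>f\<in>E. if x \<in> f then z f else 0) + (if x \<in> {y,w} then \<sigma> y else 0)"
      using fin ywE by (simp add: sum.distrib)
    also have "\<dots> = \<sigma> x * ((if x = u then 1 else 0) - (if x = w then 1 else 0))"
      using z(2) yw by (cases "x = y"; cases "x = w"; cases "x = u") auto
    finally show ?thesis .
  qed
  ultimately show ?case by blast
qed

lemma eig_from_flow:
  fixes E :: "'v set set"
  assumes simple: "\<forall>e\<in>E. \<exists>x y. x \<noteq> y \<and> e = {x,y}" and fin: "finite E"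
    and supp: "\<forall>f. f \<notin> E \<longrightarrow> z f = 0"
    and bd: "\<forall>x. (\<Sum>f\<in>E. if x \<in> f then z f else 0) = 0"
  shows "z \<in> eigenspace_on E (line_adj E) (-2)"
  unfolding eigenspace_on_def
proof (intro CollectI conjI allI impI ballI)
  fix i assume "i \<notin> E" then show "z i = 0" using supp by auto
next
  fix e assume eE: "e \<in> E"
  then obtain u w where uw: "u \<noteq> w" "e = {u,w}" using simple by blast
  have "(\<Sum>f\<in>E. line_adj E e f * z f) = (\<Sum>f\<in>E. (if u \<in> f then z f else 0) + (if w \<in> f then z f else 0) - 2 * (if f = e then z f else 0))"
  proof (rule sum.cong)
    fix f assume fE: "f \<in> E"
    then obtain x y where xy: "x \<noteq> y" "f = {x,y}" using simple by blast
    show "line_adj E e f * z f = (if u \<in> f then z f else 0) + (if w \<in> f then z f else 0) - 2 * (if f = e then z f else 0)"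
    proof (cases "f = e")
      case True then show ?thesis using uw unfolding line_adj_def by auto
    next
      case False
      then have "\<not> (u \<in> f \<and> w \<in> f)" using uw xy by auto
      then show ?thesis using False eE fE uw unfolding line_adj_def by auto
    qed
  qed simp
  also have "\<dots> = (\<Sum>f\<in>E. if u \<in> f then z f else 0) + (\<Sum>f\<in>E. if w \<in> f then z f else 0) - 2 * (\<Sum>f\<in>E. if f = e then z f else 0)"
    by (simp add: sum.distrib sum_subtractf sum_distrib_left)
  also have "\<dots> = -2 * z e" using bd fin eE by simp
  finally show "(\<Sum>f\<in>E. line_adj E e f * z f) = -2 * z e" .
qed

theorem mainTheorem13:
  fixes V :: "'v set" and E :: "'v set set" and a b \<alpha> \<beta> :: 'v
  assumes "simple_graph V E"
    and "graph_connected V E"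
    and "bipartite V E"
    and "card E \<ge> card V"
    and "{a, b} \<in> E" and "{\<alpha>, \<beta>} \<in> E"
    and "{a, b} \<noteq> {\<alpha>, \<beta>}"
    and "strongly_cospectral E (line_adj E) (vertex_state {a, b}) (vertex_state {\<alpha>, \<beta>})"
  shows "\<not> graph_connected V (E - {{a, b}, {\<alpha>, \<beta>}})"
proof
  assume conn: "graph_connected V (E - {{a, b}, {\<alpha>, \<beta>}})"
  define Ed where "Ed = E - {{a, b}, {\<alpha>, \<beta>}}"
  have finV: "finite V" and edg: "\<forall>e\<in>E. \<exists>x y. x \<in> V \<and> y \<in> V \<and> x \<noteq> y \<and> e = {x, y}"
    using assms(1) unfolding simple_graph_def by auto
  have "E \<subseteq> Pow V"
  proof
    fix e assume "e \<in> E"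
    then obtain x y where "x \<in> V" "y \<in> V" "e = {x,y}" using bspec[OF edg] by blast
    then show "e \<in> Pow V" by auto
  qed
  then have finE: "finite E" using finV finite_subset by blast
  have simple: "\<forall>e\<in>E. \<exists>x y. x \<noteq> y \<and> e = {x,y}" using edg by blast
  obtain c :: "'v \<Rightarrow> bool" where c: "\<forall>x\<in>V. \<forall>y\<in>V. {x, y} \<in> E \<longrightarrow> c x \<noteq> c y"
    using assms(3) unfolding bipartite_def by blast
  define \<sigma> where "\<sigma> = (\<lambda>x. if c x then (1::real) else -1)"
  have eprop: "y \<noteq> w \<and> \<sigma> y = - \<sigma> w" if ywE: "{y,w} \<in> E" for y w
  proof -
    obtain x' y' where xy: "x' \<in> V" "y' \<in> V" "x' \<noteq> y'" "{y,w} = {x',y'}" using bspec[OF edg ywE] by blast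
    then have "y \<in> V" "w \<in> V" "y \<noteq> w" by (auto simp: doubleton_eq_iff)
    then have "c y \<noteq> c w" using c ywE by blast
    then show ?thesis using \<open>y \<noteq> w\<close> unfolding \<sigma>_def by auto
  qed
  have abV: "a \<in> V" "b \<in> V" using edg assms(5) by (auto simp: doubleton_eq_iff) 
  have R: "(\<lambda>x y. {x,y} \<in> Ed)\<^sup>*\<^sup>* a b" using conn abV unfolding graph_connected_def Ed_def by blast
  obtain z where z: "\<forall>f. f \<notin> Ed \<longrightarrow> z f = 0"
    "\<forall>x. (\<Sum>f\<in>E. if x \<in> f then z f else 0) = \<sigma> x * ((if x = a then 1 else 0) - (if x = b then 1 else 0))"
    using walk_flow[OF finE _ _ R, of \<sigma>] eprop unfolding Ed_def by blast
  have ab: "a \<noteq> b" "\<sigma> a = - \<sigma> b" using eprop assms(5) by auto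
  define zs where "zs = (\<lambda>f. z f + (if f = {a,b} then \<sigma> b else 0))"
  have supp: "\<forall>f. f \<notin> E \<longrightarrow> zs f = 0" using z(1) assms(5) unfolding zs_def Ed_def by auto
  have bd: "\<forall>x. (\<Sum>f\<in>E. if x \<in> f then zs f else 0) = 0"
  proof
    fix x
    have "(\<Sum>f\<in>E. if x \<in> f then zs f else 0) = (\<Sum>f\<in>E. (if x \<in> f then z f else 0) + (if f = {a,b} then (if x \<in> {a,b} then \<sigma> b else 0) else 0))"
      by (rule sum.cong) (auto simp: zs_def)
    also have "\<dots> = (\<Sum>f\<in>E. if x \<in> f then z f else 0) + (if x \<in> {a,b} then \<sigma> b else 0)"
      using finE assms(5) by (simp add: sum.distrib)
    also have "\<dots> = 0"
      using z(2) ab by (cases "x = a"; cases "x = b") auto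
    finally show "(\<Sum>f\<in>E. if x \<in> f then zs f else 0) = 0" .
  qed
  have zsW: "zs \<in> eigenspace_on E (line_adj E) (-2)" by (rule eig_from_flow[OF simple finE supp bd])
  have zab: "zs {a,b} = \<sigma> b" using z(1) unfolding zs_def Ed_def by simp
  have zab2: "zs {\<alpha>,\<beta>} = 0" using z(1) assms(7) unfolding zs_def Ed_def by auto
  have sb: "\<sigma> b \<noteq> 0" unfolding \<sigma>_def by simp
  have "zs \<noteq> (\<lambda>_. 0)" using zab sb by (metis)
  then have eig: "is_eigenvalue_on E (line_adj E) (-2)" using zsW unfolding is_eigenvalue_on_def by blast
  define P1 where "P1 = spectral_proj E (line_adj E) (-2) (vertex_state {a, b})"
  define P2 where "P2 = spectral_proj E (line_adj E) (-2) (vertex_state {\<alpha>, \<beta>})"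
  have "inner_on E (\<lambda>i. vertex_state {a, b} i - P1 i) zs = 0"
    using spectral_proj_spec[OF finE] zsW unfolding P1_def by blast
  then have i1: "inner_on E P1 zs = \<sigma> b"
    unfolding inner_diff_left using inner_vs[OF finE assms(5)] zab by simp
  have "inner_on E (\<lambda>i. vertex_state {\<alpha>, \<beta>} i - P2 i) zs = 0"
    using spectral_proj_spec[OF finE] zsW unfolding P2_def by blast
  then have i2: "inner_on E P2 zs = 0"
    unfolding inner_diff_left using inner_vs[OF finE assms(6)] zab2 by simp
  have "P1 = P2 \<or> P1 = (\<lambda>i. - P2 i)"
    using assms(8) eig unfolding strongly_cospectral_def P1_def P2_def by blast
  then show False
  proof
    assume "P1 = P2" then show False using i1 i2 sb by simp
  next
    assume "P1 = (\<lambda>i. - P2 i)" then show False using i1 i2 sb inner_neg_left[of E P2 zs] by simp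
  qed
qed

end
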